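(* Let $\Omega\subset\mathbf R^n$ ($n=1,2$) be a bounded open domain, and let $0<\rho_1\le\rho_2\le\cdots$ be the positive eigenvalues of $-\Delta$ on $\Omega$ with Neumann boundary conditions (as ordered in the context). Let $B=\begin{pmatrix} f_u & f_v\\ g_u & g_v\end{pmatrix}$ be a real matrix with $f_u>0$, $g_v<0$, $f_ug_v-f_vg_u>0$ and $f_u+g_v<0$, and let $D=\mathrm{diag}(1,d)$. For $\lambda=(\gamma,d)$ with $\gamma,d>0$ and $k=1,2,\ldots$, put $E_k(\lambda)=-\rho_kD+\gamma B$ and let $$\beta_{k1,2}(\lambda)=\tfrac12\Big(\mathrm{tr}\,E_k(\lambda)\pm\big((\mathrm{tr}\,E_k(\lambda))^2-4\det E_k(\lambda)\big)^{1/2}\Big)$$ (upper sign for $\beta_{k1}$, lower sign for $\beta_{k2}$). Let $\Lambda_1$, $R_1$, $R_2$ be as defined in the context. Then $$\Re\beta_{11}(\lambda)<0,\ \Re\beta_{12}(\lambda)<0 \text{ if } \lambda\in R_1;\qquad \beta_{11}(\lambda)=0,\ \beta_{12}(\lambda)<0 \text{ if } \lambda\in\Lambda_1;\qquad \beta_{11}(\lambda)>0,\ \beta_{12}(\lambda)<0 \text{ if } \lambda\in R_2.$$ Furthermore, for $k=2,3,\ldots$, $\Re\beta_{k1}(\lambda)<0$ and $\Re\beta_{k2}(\lambda)<0$ if $\lambda\in\Lambda_1$.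
   Context: The numbers $\beta_{k1},\beta_{k2}$ are the eigenvalues of the linearized operator $L_\lambda=\Delta D+\gamma B$ (acting on pairs of functions with Neumann boundary conditions) restricted to the span of the $k$-th Laplace eigenfunction. For $k=1,2$ define, for $\gamma>\rho_k/f_u$, $$d_k(\gamma)=\frac{\gamma^2\det(B)+\gamma\rho_k|g_v|}{\rho_k(\gamma f_u-\rho_k)},$$ so that $\det E_k(\lambda)=0$ exactly when $d=d_k(\gamma)$; the set $\{(\gamma,d):d=d_k(\gamma),\ \gamma>\rho_k/f_u\}$ is the positive branch of the curve $\Lambda_k$. Let $\gamma_1$ be the value of $\gamma$ at which the positive branches of $\Lambda_1$ and $\Lambda_2$ cross. Then $\Lambda_1$ here denotes $\{(\gamma,d_1(\gamma)):\rho_1/f_u<\gamma<\gamma_1\}$, and $R_1=\{(\gamma,d):\rho_1/f_u<\gamma<\gamma_1,\ 0<d<d_1(\gamma)\}$, $R_2=\{(\gamma,d):\rho_1/f_u<\gamma<\gamma_1,\ d_1(\gamma)<d<d_2(\gamma)\}$. *)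

theory Defs
  imports "HOL-Analysis.Analysis"
begin

definition Bmat :: "real \<Rightarrow> real \<Rightarrow> real \<Rightarrow> real \<Rightarrow> real^2^2" where
  "Bmat fu fv gu gv = (\<chi> i j. if i = 1 then (if j = 1 then fu else fv)
                                  else (if j = 1 then gu else gv))"

definition Dmat :: "real \<Rightarrow> real^2^2" where
  "Dmat d = (\<chi> i j. if i = j then (if i = 1 then 1 else d) else 0)"

definition Emat :: "real^2^2 \<Rightarrow> real \<Rightarrow> real \<Rightarrow> real \<Rightarrow> real^2^2" where
  "Emat B rk \<gamma> d = (- rk) *\<^sub>R Dmat d + \<gamma> *\<^sub>R B"

definition beta1 :: "real^2^2 \<Rightarrow> complex" where
  "beta1 E = (complex_of_real (trace E)
              + csqrt (complex_of_real ((trace E)\<^sup>2 - 4 * det E))) / 2"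

definition beta2 :: "real^2^2 \<Rightarrow> complex" where
  "beta2 E = (complex_of_real (trace E)
              - csqrt (complex_of_real ((trace E)\<^sup>2 - 4 * det E))) / 2"

definition dcurve :: "real^2^2 \<Rightarrow> real \<Rightarrow> real \<Rightarrow> real \<Rightarrow> real" where
  "dcurve B gv rk \<gamma> = (\<gamma>\<^sup>2 * det B + \<gamma> * rk * \<bar>gv\<bar>) / (rk * (\<gamma> * B $ 1 $ 1 - rk))"

end

theory Submission
  imports Defs
begin


lemma beta_real:
  fixes E :: "real^2^2"
  assumes "(trace E)^2 - 4*det E \<ge> 0"
  shows "beta1 E = of_real ((trace E + sqrt ((trace E)^2 - 4*det E))/2)"
    "beta2 E = of_real ((trace E - sqrt ((trace E)^2 - 4*det E))/2)"
proof -
  have "csqrt (complex_of_real ((trace E)\<^sup>2 - 4 * det E)) = of_real (sqrt ((trace E)^2 - 4*det E))"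
    using assms by (rule csqrt_of_real)
  then show "beta1 E = of_real ((trace E + sqrt ((trace E)^2 - 4*det E))/2)"
    "beta2 E = of_real ((trace E - sqrt ((trace E)^2 - 4*det E))/2)"
    unfolding beta1_def beta2_def by simp_all
qed

lemma beta_pos_det:
  fixes E :: "real^2^2"
  assumes "trace E < 0" "det E > 0"
  shows "Re (beta1 E) < 0 \<and> Re (beta2 E) < 0"
proof (cases "(trace E)^2 - 4*det E \<ge> 0")
  case True
  have "(trace E)^2 - 4*det E < (- trace E)^2" using assms by simp
  hence s: "sqrt ((trace E)^2 - 4*det E) < - trace E"
    using assms by (simp add: real_sqrt_less_iff real_less_lsqrt True)
  show ?thesis unfolding beta_real[OF True] using s assms real_sqrt_ge_zero[OF True] by (simp del: real_sqrt_ge_zero; linarith)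
next
  case False
  have "Re (csqrt (complex_of_real ((trace E)\<^sup>2 - 4 * det E))) = 0"
    using False by (simp del: of_real_diff of_real_power of_real_mult)
  then show ?thesis using assms
    unfolding beta1_def beta2_def by simp
qed

lemma beta_zero_det:
  fixes E :: "real^2^2"
  assumes "trace E < 0" "det E = 0"
  shows "beta1 E = 0 \<and> beta2 E \<in> \<real> \<and> Re (beta2 E) < 0"
proof -
  have "sqrt ((trace E)^2 - 4*det E) = - trace E" using assms by simp
  then show ?thesis using assms beta_real[of E]
    by simp
qed

lemma beta_neg_det:
  fixes E :: "real^2^2"
  assumes "trace E < 0" "det E < 0"
  shows "beta1 E \<in> \<real> \<and> Re (beta1 E) > 0 \<and> beta2 E \<in> \<real> \<and> Re (beta2 E) < 0"
proof -
  have h: "(trace E)^2 - 4*det E \<ge> 0" using assms by (smt (verit) zero_le_power2)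
  have "(trace E)^2 < (trace E)^2 - 4*det E" using assms by simp
  hence "sqrt ((trace E)^2) < sqrt ((trace E)^2 - 4*det E)" by (simp only: real_sqrt_less_iff)
  hence s: "sqrt ((trace E)^2 - 4*det E) > \<bar>trace E\<bar>" by simp
  then show ?thesis unfolding beta_real[OF h] using assms
    by simp
qed

lemma Nid: fixes a c g r1 r2 fu :: real
  shows "(a*g^2 + g*c*r2)*r1*(g*fu - r1) - (a*g^2 + g*c*r1)*r2*(g*fu - r2)
        = (r1-r2)*g*(fu*a*g^2 - a*(r1+r2)*g - c*r1*r2)"
  by (simp add: algebra_simps power2_eq_square)
lemma pdiff: fixes a c x y r1 r2 fu :: real
  shows "(fu*a*x^2 - a*(r1+r2)*x - c*r1*r2) - (fu*a*y^2 - a*(r1+r2)*y - c*r1*r2)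
     = (x-y)*(fu*a*(x+y) - a*(r1+r2))"
  by (simp add: algebra_simps power2_eq_square)
lemma hdiff: fixes a c d g r r1 fu :: real
  shows "(g^2*a + g*r*c - r*d*(g*fu - r)) - (g^2*a + g*r1*c - r1*d*(g*fu - r1))
     = (r - r1)*(d*(r+r1) - g*(fu*d - c))"
  by (simp add: algebra_simps power2_eq_square)

lemma trace_Emat: "trace (Emat (Bmat fu fv gu gv) r g d) = -r*(1+d) + g*(fu+gv)"
  by (simp add: Emat_def Bmat_def Dmat_def trace_def UNIV_2 algebra_simps)

lemma det_Emat: "det (Emat (Bmat fu fv gu gv) r g d) = (g*fu - r)*(g*gv - r*d) - g^2*fv*gu"
  by (simp add: Emat_def Bmat_def Dmat_def det_2 algebra_simps power2_eq_square)

lemma dcurve_eq: "dcurve (Bmat fu fv gu gv) gv r g = (g^2*(fu*gv - fv*gu) + g*r*\<bar>gv\<bar>) / (r*(g*fu - r))"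
  by (simp add: dcurve_def Bmat_def det_2)


theorem lemma3p1:
  fixes \<rho> :: "nat \<Rightarrow> real" and fu fv gu gv \<gamma>1 :: real
  defines "B \<equiv> Bmat fu fv gu gv"
  assumes rho_pos: "0 < \<rho> 1"
    and rho_mono: "\<forall>k\<ge>1. \<rho> k \<le> \<rho> (Suc k)"
    and fu_pos: "fu > 0" and gv_neg: "gv < 0"
    and detB: "fu * gv - fv * gu > 0" and trB: "fu + gv < 0"
    and cross: "\<gamma>1 > \<rho> 2 / fu" "dcurve B gv (\<rho> 1) \<gamma>1 = dcurve B gv (\<rho> 2) \<gamma>1"
    and cross_unique: "\<forall>\<gamma>. \<gamma> > \<rho> 2 / fu \<and> dcurve B gv (\<rho> 1) \<gamma> = dcurve B gv (\<rho> 2) \<gamma>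
                         \<longrightarrow> \<gamma> = \<gamma>1"
  shows "\<forall>\<gamma> d. \<rho> 1 / fu < \<gamma> \<and> \<gamma> < \<gamma>1 \<longrightarrow>
     ((0 < d \<and> d < dcurve B gv (\<rho> 1) \<gamma> \<longrightarrow>
         Re (beta1 (Emat B (\<rho> 1) \<gamma> d)) < 0 \<and> Re (beta2 (Emat B (\<rho> 1) \<gamma> d)) < 0)
    \<and> (d = dcurve B gv (\<rho> 1) \<gamma> \<longrightarrow>
         beta1 (Emat B (\<rho> 1) \<gamma> d) = 0
         \<and> beta2 (Emat B (\<rho> 1) \<gamma> d) \<in> \<real> \<and> Re (beta2 (Emat B (\<rho> 1) \<gamma> d)) < 0)
    \<and> (dcurve B gv (\<rho> 1) \<gamma> < d \<and> d < dcurve B gv (\<rho> 2) \<gamma> \<longrightarrow>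
         beta1 (Emat B (\<rho> 1) \<gamma> d) \<in> \<real> \<and> Re (beta1 (Emat B (\<rho> 1) \<gamma> d)) > 0
         \<and> beta2 (Emat B (\<rho> 1) \<gamma> d) \<in> \<real> \<and> Re (beta2 (Emat B (\<rho> 1) \<gamma> d)) < 0)
    \<and> (d = dcurve B gv (\<rho> 1) \<gamma> \<longrightarrow>
         (\<forall>k\<ge>2. Re (beta1 (Emat B (\<rho> k) \<gamma> d)) < 0 \<and> Re (beta2 (Emat B (\<rho> k) \<gamma> d)) < 0)))"
  proof (intro allI impI)
  fix \<gamma> d
  assume g: "\<rho> 1 / fu < \<gamma> \<and> \<gamma> < \<gamma>1"
  define a where "a = fu*gv - fv*gu"
  define c where "c = - gv"
  have a0: "a > 0" using detB a_def by simp
  have c0: "c > 0" "\<bar>gv\<bar> = c" using gv_neg c_def by auto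
  have r12: "\<rho> 1 \<le> \<rho> 2" using rho_mono by (metis Suc_1 order_refl)
  have rk2: "\<rho> 2 \<le> \<rho> k" if "k \<ge> 2" for k
    using that
  proof (induction k rule: dec_induct)
    case base then show ?case by simp
  next
    case (step n) then show ?case using rho_mono[rule_format, of n] by simp
  qed
  have r12s: "\<rho> 1 < \<rho> 2"
  proof (rule ccontr)
    assume "\<not> \<rho> 1 < \<rho> 2"
    hence e: "\<rho> 1 = \<rho> 2" using r12 by simp
    have "\<gamma>1 + 1 = \<gamma>1" using cross_unique[rule_format, of "\<gamma>1+1"] cross(1) e by simp
    thus False by simp
  qed
  have r1: "\<rho> 1 > 0" by (rule rho_pos)
  have r2: "\<rho> 2 > 0" using r1 r12 by simp
  have gfu1: "\<gamma>*fu > \<rho> 1" using g fu_pos by (simp add: field_simps)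
  have g0: "\<gamma> > 0" using gfu1 r1 fu_pos by (smt (verit) mult_nonpos_nonneg)
  define H where "H r = \<gamma>^2*a + \<gamma>*r*c - r*d*(\<gamma>*fu - r)" for r
  have detE: "det (Emat B r \<gamma> d) = H r" for r
    unfolding B_def det_Emat H_def a_def c_def by (simp add: algebra_simps power2_eq_square)
  have trE: "r > 0 \<Longrightarrow> d > 0 \<Longrightarrow> trace (Emat B r \<gamma> d) < 0" for r
  proof -
    assume "r > 0" "d > 0"
    hence "r*(1+d) > 0" by simp
    moreover have "\<gamma>*(fu+gv) < 0" using trB g0 by (simp add: mult_pos_neg)
    ultimately show ?thesis unfolding B_def trace_Emat by linarith
  qed
  define d1 where "d1 = dcurve B gv (\<rho> 1) \<gamma>"
  have d1e: "d1 = (\<gamma>^2*a + \<gamma>*\<rho> 1*c) / (\<rho> 1*(\<gamma>*fu - \<rho> 1))"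
    unfolding d1_def B_def dcurve_eq a_def using c0 by simp
  have den1: "\<rho> 1*(\<gamma>*fu - \<rho> 1) > 0" using r1 gfu1 by simp
  have d1pos: "d1 > 0" unfolding d1e using den1 a0 c0 g0 r1
    by (intro divide_pos_pos) (simp_all add: add_pos_pos)
  have dd1: "\<rho> 1*(\<gamma>*fu - \<rho> 1) * d1 = \<gamma>^2*a + \<gamma>*\<rho> 1*c"
      unfolding d1e using den1 by (metis less_irrefl nonzero_mult_div_cancel_left times_divide_eq_right)
  have Hd: "H (\<rho> 1) = \<rho> 1*(\<gamma>*fu - \<rho> 1) * (d1 - d)"
    unfolding H_def using dd1 by (simp add: algebra_simps)
  show "(0 < d \<and> d < dcurve B gv (\<rho> 1) \<gamma> \<longrightarrow>
         Re (beta1 (Emat B (\<rho> 1) \<gamma> d)) < 0 \<and> Re (beta2 (Emat B (\<rho> 1) \<gamma> d)) < 0)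
    \<and> (d = dcurve B gv (\<rho> 1) \<gamma> \<longrightarrow>
         beta1 (Emat B (\<rho> 1) \<gamma> d) = 0
         \<and> beta2 (Emat B (\<rho> 1) \<gamma> d) \<in> \<real> \<and> Re (beta2 (Emat B (\<rho> 1) \<gamma> d)) < 0)
    \<and> (dcurve B gv (\<rho> 1) \<gamma> < d \<and> d < dcurve B gv (\<rho> 2) \<gamma> \<longrightarrow>
         beta1 (Emat B (\<rho> 1) \<gamma> d) \<in> \<real> \<and> Re (beta1 (Emat B (\<rho> 1) \<gamma> d)) > 0
         \<and> beta2 (Emat B (\<rho> 1) \<gamma> d) \<in> \<real> \<and> Re (beta2 (Emat B (\<rho> 1) \<gamma> d)) < 0)
    \<and> (d = dcurve B gv (\<rho> 1) \<gamma> \<longrightarrow>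
         (\<forall>k\<ge>2. Re (beta1 (Emat B (\<rho> k) \<gamma> d)) < 0 \<and> Re (beta2 (Emat B (\<rho> k) \<gamma> d)) < 0))"
    unfolding d1_def[symmetric]
  proof (intro conjI impI)
    assume h: "0 < d \<and> d < d1"
    have hp: "H (\<rho> 1) > 0" unfolding Hd using h den1 by simp
    have d0: "d > 0" using h by simp
    show "Re (beta1 (Emat B (\<rho> 1) \<gamma> d)) < 0" "Re (beta2 (Emat B (\<rho> 1) \<gamma> d)) < 0"
      using beta_pos_det[OF trE[OF r1 d0] hp[folded detE]] by auto
  next
    assume h: "d = d1"
    have hp: "H (\<rho> 1) = 0" unfolding Hd using h by simp
    have d0: "d > 0" using h d1pos by simp
    show "beta1 (Emat B (\<rho> 1) \<gamma> d) = 0" "beta2 (Emat B (\<rho> 1) \<gamma> d) \<in> \<real>" "Re (beta2 (Emat B (\<rho> 1) \<gamma> d)) < 0"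
      using beta_zero_det[OF trE[OF r1 d0] hp[folded detE]] by auto
  next
    assume h: "d1 < d \<and> d < dcurve B gv (\<rho> 2) \<gamma>"
    have "H (\<rho> 1) < 0" unfolding Hd using h den1 by (simp add: mult_pos_neg)
    have d0: "d > 0" using h d1pos by simp
    show "beta1 (Emat B (\<rho> 1) \<gamma> d) \<in> \<real>" "Re (beta1 (Emat B (\<rho> 1) \<gamma> d)) > 0"
         "beta2 (Emat B (\<rho> 1) \<gamma> d) \<in> \<real>" "Re (beta2 (Emat B (\<rho> 1) \<gamma> d)) < 0"
      using beta_neg_det[OF trE[OF r1 d0] \<open>H (\<rho> 1) < 0\<close>[folded detE]] by auto
  next
    assume h: "d = d1"
    have dpos: "d > 0" using h d1pos by simp
    have H1: "H (\<rho> 1) = 0" unfolding Hd h by simp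
    have H2: "H (\<rho> 2) > 0"
    proof (cases "\<gamma>*fu \<le> \<rho> 2")
      case True
      have "\<rho> 2*d*(\<gamma>*fu - \<rho> 2) \<le> 0" using True r2 dpos
        by (simp add: mult_nonneg_nonpos)
      moreover have "\<gamma>^2*a > 0" "\<gamma>*\<rho> 2*c > 0" using g0 a0 r2 c0 by simp_all
      ultimately show ?thesis unfolding H_def by linarith
    next
      case False
      hence gfu2: "\<gamma>*fu > \<rho> 2" by simp
      define p where "p x = fu*a*x^2 - a*(\<rho> 1+\<rho> 2)*x - c*\<rho> 1*\<rho> 2" for x
      define N where "N x = (a*x^2 + x*c*\<rho> 2)*\<rho> 1*(x*fu - \<rho> 1) - (a*x^2 + x*c*\<rho> 1)*\<rho> 2*(x*fu - \<rho> 2)" for x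
      have NP: "N x = (\<rho> 1-\<rho> 2)*x*p x" for x unfolding N_def p_def by (rule Nid)
      define x0 where "x0 = \<rho> 2 / fu"
      have x0: "x0 > 0" "x0 * fu = \<rho> 2" using r2 fu_pos unfolding x0_def by simp_all
      have "N x0 = (a*x0^2 + x0*c*\<rho> 2)*\<rho> 1*(\<rho> 2 - \<rho> 1)"
        unfolding N_def x0(2) by simp
      also have "... > 0" using x0 a0 c0 r1 r2 r12s by (simp add: add_pos_pos)
      finally have "(\<rho> 1-\<rho> 2)*x0*p x0 > 0" unfolding NP .
      hence px0: "p x0 < 0" using r12s x0 by (simp add: zero_less_mult_iff)
      have g1pos: "\<gamma>1 > 0" using cross(1) r2 fu_pos by (smt (verit) divide_pos_pos)
      have g1fu: "\<gamma>1*fu > \<rho> 2" using cross(1) fu_pos by (simp add: field_simps)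
      have "(a*\<gamma>1^2 + \<gamma>1*c*\<rho> 2) / (\<rho> 2*(\<gamma>1*fu - \<rho> 2)) = (a*\<gamma>1^2 + \<gamma>1*c*\<rho> 1) / (\<rho> 1*(\<gamma>1*fu - \<rho> 1))"
        using cross(2) unfolding B_def dcurve_eq a_def using c0 by (simp add: algebra_simps)
      hence "N \<gamma>1 = 0" unfolding N_def using g1fu r1 r2 r12s
        by (simp add: field_simps split: if_splits)
      hence pg1: "p \<gamma>1 = 0" unfolding NP using r12s g1pos by simp
      have gx0: "\<gamma> > x0" using gfu2 fu_pos unfolding x0_def by (simp add: field_simps)
      have "p x0 - p \<gamma>1 = (x0 - \<gamma>1)*(fu*a*(x0+\<gamma>1) - a*(\<rho> 1+\<rho> 2))" unfolding p_def by (rule pdiff)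
      hence "(x0 - \<gamma>1)*(fu*a*(x0+\<gamma>1) - a*(\<rho> 1+\<rho> 2)) < 0" using px0 pg1 by simp
      moreover have "x0 < \<gamma>1" using gx0 g by simp
      ultimately have L0: "fu*a*(x0+\<gamma>1) - a*(\<rho> 1+\<rho> 2) > 0" by (simp add: mult_less_0_iff)
      have "fu*a*(x0+\<gamma>1) \<le> fu*a*(\<gamma>+\<gamma>1)" using gx0 fu_pos a0 by simp
      hence L: "fu*a*(\<gamma>+\<gamma>1) - a*(\<rho> 1+\<rho> 2) > 0" using L0 by linarith
      have "p \<gamma> - p \<gamma>1 = (\<gamma> - \<gamma>1)*(fu*a*(\<gamma>+\<gamma>1) - a*(\<rho> 1+\<rho> 2))" unfolding p_def by (rule pdiff)
      hence pg: "p \<gamma> < 0" using pg1 L g by (simp add: mult_neg_pos)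
      have Ng: "N \<gamma> > 0" unfolding NP using pg r12s g0 by (simp add: mult_neg_neg mult_neg_pos)
      have "H (\<rho> 2) * (\<rho> 1*(\<gamma>*fu - \<rho> 1)) = N \<gamma>"
      proof -
        have "H (\<rho> 2) * (\<rho> 1*(\<gamma>*fu - \<rho> 1)) = (\<gamma>^2*a + \<gamma>*\<rho> 2*c)*(\<rho> 1*(\<gamma>*fu - \<rho> 1)) - \<rho> 2*(\<gamma>*fu - \<rho> 2)*(\<rho> 1*(\<gamma>*fu - \<rho> 1) * d1)"
          unfolding H_def h by (simp add: algebra_simps)
        also have "... = N \<gamma>" unfolding dd1 N_def by (simp add: algebra_simps power2_eq_square)
        finally show ?thesis .
      qed
      then have "H (\<rho> 2) * (\<rho> 1*(\<gamma>*fu - \<rho> 1)) > 0" using Ng by simp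
      then show ?thesis using den1 by (metis zero_less_mult_pos2)
    qed
    show "\<forall>k\<ge>2. Re (beta1 (Emat B (\<rho> k) \<gamma> d)) < 0 \<and> Re (beta2 (Emat B (\<rho> k) \<gamma> d)) < 0"
    proof (intro allI impI)
      fix k :: nat assume k: "k \<ge> 2"
      have rk: "\<rho> 2 \<le> \<rho> k" using rk2 k by simp
      define M where "M r = d*(r+\<rho> 1) - \<gamma>*(fu*d - c)" for r
      have HM: "H r - H (\<rho> 1) = (r - \<rho> 1)*M r" for r unfolding H_def M_def by (rule hdiff)
      have "M (\<rho> 2) > 0" using HM[of "\<rho> 2"] H1 H2 r12s by (simp add: zero_less_mult_iff)
      moreover have "M (\<rho> 2) \<le> M (\<rho> k)" unfolding M_def using rk dpos by simp
      ultimately have "M (\<rho> k) > 0" by simp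
      hence "H (\<rho> k) > 0" using HM[of "\<rho> k"] H1 r12s rk by simp
      then show "Re (beta1 (Emat B (\<rho> k) \<gamma> d)) < 0 \<and> Re (beta2 (Emat B (\<rho> k) \<gamma> d)) < 0"
        using beta_pos_det[OF trE[OF _ dpos] \<open>H (\<rho> k) > 0\<close>[folded detE]] r2 rk by simp
    qed
  qed
qed

end
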